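(* Let $m\ge3$ and $\Omega=\{B\subset\mathcal M:1\le|B|\le m-2\}$. The singleton partition $\mathcal S$ is (a) a minimizer of $\Delta$ (i.e. $\Delta(\mathcal S)=\mathbf I(X_{\mathcal M})$) if and only if $\Delta(\mathcal S)\le\Delta(\mathcal P_B)$ for all $B\in\Omega$; (b) the unique minimizer of $\Delta$ if and only if $\Delta(\mathcal S)<\Delta(\mathcal P_B)$ for all $B\in\Omega$.
   Context: Let $\mathcal M=\{1,\dots,m\}$, and let $X_{\mathcal M}$ be jointly distributed finite-valued random variables, with $X_A=(X_i:i\in A)$. For a partition $\mathcal P$ of $\mathcal M$ with $|\mathcal P|\ge2$, $\Delta(\mathcal P)=\frac1{|\mathcal P|-1}[\sum_{A\in\mathcal P}H(X_A)-H(X_{\mathcal M})]$, and $\mathbf I(X_{\mathcal M})=\min_{\mathcal P}\Delta(\mathcal P)$ over all such partitions. $\mathcal S=\{\{1\},\dots,\{m\}\}$. For a nonempty $B=\{b_1,\dots,b_{|B|}\}\subsetneq\mathcal M$, $\mathcal P_B=\{B^c,\{b_1\},\dots,\{b_{|B|}\}\}$. *)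

theory Defs
  imports "HOL-Probability.Probability_Mass_Function" "HOL-Library.Disjoint_Sets"
begin

text \<open>The joint distribution of X_1,...,X_m is a pmf on tuples (nat => 'a);
  coordinate i is X_i.  X_A is the projection onto the coordinates in A.\<close>

definition proj :: "nat set \<Rightarrow> (nat \<Rightarrow> 'a) \<Rightarrow> (nat \<Rightarrow> 'a)" where
  "proj A x = (\<lambda>i. if i \<in> A then x i else undefined)"

definition ent :: "'b pmf \<Rightarrow> real" where
  "ent p = - (\<Sum>y\<in>set_pmf p. pmf p y * log 2 (pmf p y))"

definition H :: "(nat \<Rightarrow> 'a) pmf \<Rightarrow> nat set \<Rightarrow> real" where
  "H X A = ent (map_pmf (proj A) X)"

definition Mset :: "nat \<Rightarrow> nat set" where
  "Mset m = {1..m}"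

definition Delta :: "nat \<Rightarrow> (nat \<Rightarrow> 'a) pmf \<Rightarrow> nat set set \<Rightarrow> real" where
  "Delta m X P = ((\<Sum>A\<in>P. H X A) - H X (Mset m)) / (real (card P) - 1)"

definition partitions2 :: "nat \<Rightarrow> nat set set set" where
  "partitions2 m = {P. partition_on (Mset m) P \<and> card P \<ge> 2}"

definition MI :: "nat \<Rightarrow> (nat \<Rightarrow> 'a) pmf \<Rightarrow> real" where
  "MI m X = Min (Delta m X ` partitions2 m)"

definition singletons :: "nat \<Rightarrow> nat set set" where
  "singletons m = (\<lambda>i. {i}) ` Mset m"

definition PB :: "nat \<Rightarrow> nat set \<Rightarrow> nat set set" where
  "PB m B = insert (Mset m - B) ((\<lambda>b. {b}) ` B)"

definition Omega :: "nat \<Rightarrow> nat set set" where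
  "Omega m = {B. B \<subseteq> Mset m \<and> 1 \<le> card B \<and> card B \<le> m - 2}"

end

theory Submission
  imports Defs
begin

definition gg :: "(nat \<Rightarrow> 'a) pmf \<Rightarrow> nat set \<Rightarrow> real" where
  "gg X A = (\<Sum>i\<in>A. H X {i}) - H X A"

lemma part_sum:
  assumes "partition_on M P" "finite M"
  shows "(\<Sum>A\<in>P. \<Sum>i\<in>A. f i) = (\<Sum>i\<in>M. (f i :: real))"
proof -
  have U: "\<Union>P = M" and dj: "disjoint P" using assms(1) by (auto simp: partition_on_def)
  have fa: "\<forall>A\<in>P. finite A" using U assms(2) by (metis Union_upper finite_subset)
  have "\<forall>A\<in>P. \<forall>B\<in>P. A \<noteq> B \<longrightarrow> A \<inter> B = {}" using dj
    by (auto simp: pairwise_def disjnt_def)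
  from sum.Union_disjoint[OF fa this, of f] U show ?thesis by simp
qed

lemma part_card:
  assumes "partition_on M P" "finite M"
  shows "(\<Sum>A\<in>P. real (card A)) = real (card M)"
  using part_sum[OF assms, of "\<lambda>_. 1"] by simp

lemma Delta_part:
  assumes "partition_on (Mset m) P"
  shows "Delta m X P = ((\<Sum>i\<in>Mset m. H X {i}) - H X (Mset m) - (\<Sum>A\<in>P. gg X A)) / (real (card P) - 1)"
proof -
  have "(\<Sum>A\<in>P. gg X A) = (\<Sum>A\<in>P. \<Sum>i\<in>A. H X {i}) - (\<Sum>A\<in>P. H X A)"
    unfolding gg_def by (simp add: sum_subtractf)
  also have "\<dots> = (\<Sum>i\<in>Mset m. H X {i}) - (\<Sum>A\<in>P. H X A)"
    using part_sum[OF assms] by (simp add: Mset_def)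
  finally show ?thesis unfolding Delta_def by simp
qed

lemma card_Mset[simp]: "card (Mset m) = m" by (simp add: Mset_def)
lemma finite_Mset[simp]: "finite (Mset m)" by (simp add: Mset_def)

lemma gg_single: "gg X {i} = 0" by (simp add: gg_def)

lemma S_facts:
  assumes "m \<ge> 3"
  shows "singletons m \<in> partitions2 m"
    "Delta m X (singletons m) = ((\<Sum>i\<in>Mset m. H X {i}) - H X (Mset m)) / (real m - 1)"
proof -
  have cs: "card (singletons m) = m" unfolding singletons_def
    by (subst card_image) (auto simp: inj_on_def)
  show "singletons m \<in> partitions2 m" unfolding partitions2_def
    using cs assms by (auto simp: singletons_def partition_on_singletons)
  have "(\<Sum>A\<in>singletons m. H X A) = (\<Sum>i\<in>Mset m. H X {i})" unfolding singletons_def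
    by (subst sum.reindex) (auto simp: inj_on_def)
  then show "Delta m X (singletons m) = ((\<Sum>i\<in>Mset m. H X {i}) - H X (Mset m)) / (real m - 1)"
    unfolding Delta_def cs by simp
qed

lemma PB_facts:
  assumes "m \<ge> 3" "B \<in> Omega m"
  shows "PB m B \<in> partitions2 m" "PB m B \<noteq> singletons m"
    "Delta m X (PB m B) = ((\<Sum>i\<in>Mset m. H X {i}) - H X (Mset m) - gg X (Mset m - B)) / (real m - real (card (Mset m - B)))"
    "card (Mset m - B) \<ge> 2"
proof -
  have BM: "B \<subseteq> Mset m" "1 \<le> card B" "card B \<le> m - 2" using assms(2) by (auto simp: Omega_def)
  have fB: "finite B" using BM(1) finite_Mset finite_subset by blast
  have cA: "card (Mset m - B) = m - card B" using BM(1) fB by (simp add: card_Diff_subset)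
  show c2: "card (Mset m - B) \<ge> 2" using cA BM assms(1) by linarith
  have notin: "Mset m - B \<notin> (\<lambda>b. {b}) ` B" using c2 by auto
  have cP: "card (PB m B) = card B + 1" unfolding PB_def
    using notin fB by (subst card_insert_disjoint) (auto simp: card_image inj_on_def)
  have ne: "Mset m - B \<noteq> {}" using c2 by (metis card.empty not_numeral_le_zero)
  have part: "partition_on (Mset m) (PB m B)" unfolding PB_def
    using BM(1) ne by (subst partition_on_insert) (auto simp: disjnt_def partition_on_singletons Diff_Diff_Int Int_absorb1)
  show "PB m B \<in> partitions2 m" unfolding partitions2_def using part cP BM by auto
  show "PB m B \<noteq> singletons m"
  proof
    assume "PB m B = singletons m"
    then have "Mset m - B \<in> singletons m" unfolding PB_def by auto
    then show False using c2 by (auto simp: singletons_def)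
  qed
  have s1: "(\<Sum>A\<in>PB m B. H X A) = H X (Mset m - B) + (\<Sum>b\<in>B. H X {b})"
    unfolding PB_def using notin fB by (subst sum.insert) (auto simp: sum.reindex inj_on_def)
  have s2: "(\<Sum>i\<in>Mset m. H X {i}) = (\<Sum>i\<in>Mset m - B. H X {i}) + (\<Sum>b\<in>B. H X {b})"
    using BM(1) by (metis add.commute finite_Mset sum.subset_diff)
  have "real (card (PB m B)) - 1 = real m - real (card (Mset m - B))"
    using cP cA BM assms(1) by simp
  then show "Delta m X (PB m B) = ((\<Sum>i\<in>Mset m. H X {i}) - H X (Mset m) - gg X (Mset m - B)) / (real m - real (card (Mset m - B)))"
    unfolding Delta_def s1 gg_def s2 by simp
qed


lemma block_facts:
  assumes "P \<in> partitions2 m" "A \<in> P"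
  shows "A \<subseteq> Mset m" "finite A" "card A \<ge> 1" "card A \<ge> 2 \<Longrightarrow> Mset m - A \<in> Omega m"
    "Mset m - (Mset m - A) = A" "card A < m"
proof -
  have part: "partition_on (Mset m) P" and cP: "card P \<ge> 2" using assms(1) by (auto simp: partitions2_def)
  show AM: "A \<subseteq> Mset m" using part assms(2) by (auto simp: partition_on_def)
  show fA: "finite A" using AM finite_Mset finite_subset by blast
  have "A \<noteq> {}" using part assms(2) by (auto simp: partition_on_def)
  then show c1: "card A \<ge> 1" using fA by (simp add: Suc_le_eq card_gt_0_iff)
  show "Mset m - (Mset m - A) = A" using AM by auto
  have finP: "finite P" using part finite_elements finite_Mset by blast
  obtain A' where A': "A' \<in> P" "A' \<noteq> A"
  proof -
    have "\<not> P \<subseteq> {A}"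
    proof
      assume "P \<subseteq> {A}" then have "card P \<le> card {A}" by (intro card_mono) simp_all
      then show False using cP by simp
    qed
    then show ?thesis using that by auto
  qed
  have "A' \<noteq> {}" using part A' by (auto simp: partition_on_def)
  moreover have "A' \<inter> A = {}" using part A' assms(2) by (auto simp: partition_on_def pairwise_def disjnt_def)
  moreover have "A' \<subseteq> Mset m" using part A' by (auto simp: partition_on_def)
  ultimately have "A \<noteq> Mset m" by auto
  then have "A \<subset> Mset m" using AM by auto
  then show lt: "card A < m" using psubset_card_mono[of "Mset m" A] by simp
  have cB: "card (Mset m - A) = m - card A" using AM fA by (simp add: card_Diff_subset)
  assume "card A \<ge> 2"
  then show "Mset m - A \<in> Omega m" unfolding Omega_def using cB lt by auto
qed

theorem proposition2:
  fixes m :: nat and X :: "(nat \<Rightarrow> 'a) pmf"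
  assumes "m \<ge> 3"
    and "finite (set_pmf X)"
  shows "(Delta m X (singletons m) = MI m X \<longleftrightarrow>
            (\<forall>B\<in>Omega m. Delta m X (singletons m) \<le> Delta m X (PB m B)))
       \<and> ((Delta m X (singletons m) = MI m X \<and>
            (\<forall>P\<in>partitions2 m. Delta m X P = MI m X \<longrightarrow> P = singletons m)) \<longleftrightarrow>
            (\<forall>B\<in>Omega m. Delta m X (singletons m) < Delta m X (PB m B)))"
proof -
  define D where "D = (\<Sum>i\<in>Mset m. H X {i}) - H X (Mset m)"
  define d where "d = Delta m X (singletons m)"
  have dD: "D = (real m - 1) * d" unfolding d_def S_facts[OF assms(1)] D_def using assms(1) by simp
  have Sin: "singletons m \<in> partitions2 m" using S_facts[OF assms(1)] by blast
  have finP2: "finite (partitions2 m)" unfolding partitions2_def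
    using finitely_many_partition_on[OF finite_Mset, of m] by (auto intro: finite_subset)
  have MIeq: "(d = MI m X) \<longleftrightarrow> (\<forall>P\<in>partitions2 m. d \<le> Delta m X P)"
  proof
    assume "d = MI m X" then show "\<forall>P\<in>partitions2 m. d \<le> Delta m X P"
      unfolding MI_def using finP2 by auto
  next
    assume "\<forall>P\<in>partitions2 m. d \<le> Delta m X P"
    then show "d = MI m X" unfolding MI_def using finP2 Sin d_def
      by (intro Min_eqI[symmetric]) auto
  qed
  have blk: "gg X A \<le> (real (card A) - 1) * d"
    if le: "\<forall>B\<in>Omega m. d \<le> Delta m X (PB m B)" and P: "P \<in> partitions2 m" "A \<in> P" for P A
  proof (cases "card A \<ge> 2")
    case True
    let ?B = "Mset m - A"
    have Bo: "?B \<in> Omega m" using block_facts(4)[OF P True] .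
    have eqA: "Mset m - ?B = A" using block_facts(5)[OF P] .
    have lt: "card A < m" using block_facts(6)[OF P] .
    have "d \<le> (D - gg X A) / (real m - real (card A))"
      using le Bo PB_facts(3)[OF assms(1) Bo, of X] eqA D_def by auto
    then have "d * (real m - real (card A)) \<le> D - gg X A" using lt by (simp add: pos_le_divide_eq)
    then show ?thesis using dD by (simp add: algebra_simps)
  next
    case False
    then have "card A = 1" using block_facts(3)[OF P] by simp
    then obtain i where "A = {i}" using card_1_singletonE by blast
    then show ?thesis by (simp add: gg_single)
  qed
  have blks: "gg X A < (real (card A) - 1) * d"
    if le: "\<forall>B\<in>Omega m. d < Delta m X (PB m B)" and P: "P \<in> partitions2 m" "A \<in> P"
       and c2: "card A \<ge> 2" for P A
  proof -
    let ?B = "Mset m - A"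
    have Bo: "?B \<in> Omega m" using block_facts(4)[OF P c2] .
    have eqA: "Mset m - ?B = A" using block_facts(5)[OF P] .
    have lt: "card A < m" using block_facts(6)[OF P] .
    have "d < (D - gg X A) / (real m - real (card A))"
      using le Bo PB_facts(3)[OF assms(1) Bo, of X] eqA D_def by auto
    then have "d * (real m - real (card A)) < D - gg X A" using lt by (simp add: pos_less_divide_eq)
    then show ?thesis using dD by (simp add: algebra_simps)
  qed
  have DP: "Delta m X P = (D - (\<Sum>A\<in>P. gg X A)) / (real (card P) - 1)"
    and sc: "(\<Sum>A\<in>P. (real (card A) - 1) * d) = (real m - real (card P)) * d"
    and kk: "real (card P) - 1 > 0"
    if P: "P \<in> partitions2 m" for P
  proof -
    have part: "partition_on (Mset m) P" and cP: "card P \<ge> 2" using P by (auto simp: partitions2_def)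
    show "Delta m X P = (D - (\<Sum>A\<in>P. gg X A)) / (real (card P) - 1)"
      using Delta_part[OF part] D_def by simp
    show "(\<Sum>A\<in>P. (real (card A) - 1) * d) = (real m - real (card P)) * d"
      using part_card[OF part finite_Mset] by (simp add: sum_distrib_right[symmetric] sum_subtractf)
    show "real (card P) - 1 > 0" using cP by simp
  qed
  have A1: "\<forall>P\<in>partitions2 m. d \<le> Delta m X P" if le: "\<forall>B\<in>Omega m. d \<le> Delta m X (PB m B)"
  proof
    fix P assume P: "P \<in> partitions2 m"
    have "(\<Sum>A\<in>P. gg X A) \<le> (\<Sum>A\<in>P. (real (card A) - 1) * d)"
      by (rule sum_mono) (rule blk[OF le P])
    then have "(\<Sum>A\<in>P. gg X A) \<le> (real m - real (card P)) * d" using sc[OF P] by simp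
    then have "d * (real (card P) - 1) \<le> D - (\<Sum>A\<in>P. gg X A)" using dD by (simp add: algebra_simps)
    then show "d \<le> Delta m X P" using DP[OF P] kk[OF P] by (simp add: pos_le_divide_eq)
  qed
  have A2: "d < Delta m X P" if le: "\<forall>B\<in>Omega m. d < Delta m X (PB m B)"
    and P: "P \<in> partitions2 m" and ne: "P \<noteq> singletons m" for P
  proof -
    have le': "\<forall>B\<in>Omega m. d \<le> Delta m X (PB m B)" using le by (auto intro: less_imp_le)
    obtain A where A: "A \<in> P" "card A \<ge> 2"
    proof (rule ccontr)
      assume "\<not> thesis"
      then have all1: "\<forall>A\<in>P. card A = 1" using that block_facts(3)[OF P] by force
      have part: "partition_on (Mset m) P" using P by (auto simp: partitions2_def)
      have "P \<subseteq> singletons m"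
      proof
        fix A assume "A \<in> P"
        then obtain i where "A = {i}" using all1 card_1_singletonE by blast
        then show "A \<in> singletons m" using block_facts(1)[OF P \<open>A \<in> P\<close>] by (auto simp: singletons_def)
      qed
      moreover have "singletons m \<subseteq> P"
      proof
        fix S assume "S \<in> singletons m"
        then obtain i where i: "i \<in> Mset m" "S = {i}" by (auto simp: singletons_def)
        then obtain A where "A \<in> P" "i \<in> A" using part by (auto simp: partition_on_def)
        then obtain j where "A = {j}" using all1 card_1_singletonE by blast
        then show "S \<in> P" using i \<open>A \<in> P\<close> \<open>i \<in> A\<close> by auto
      qed
      ultimately show False using ne by auto
    qed
    have finP: "finite P" using P by (auto simp: partitions2_def intro: card_ge_0_finite)
    have "(\<Sum>A\<in>P. gg X A) < (\<Sum>A\<in>P. (real (card A) - 1) * d)"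
      using finP A by (intro sum_strict_mono_ex1) (auto intro: blk[OF le' P] blks[OF le P])
    then have "(\<Sum>A\<in>P. gg X A) < (real m - real (card P)) * d" using sc[OF P] by simp
    then have "d * (real (card P) - 1) < D - (\<Sum>A\<in>P. gg X A)" using dD by (simp add: algebra_simps)
    then show "d < Delta m X P" using DP[OF P] kk[OF P] by (simp add: pos_less_divide_eq)
  qed
  have PBin: "\<And>B. B \<in> Omega m \<Longrightarrow> PB m B \<in> partitions2 m \<and> PB m B \<noteq> singletons m"
    using PB_facts[OF assms(1)] by blast
  have part_a: "(d = MI m X) \<longleftrightarrow> (\<forall>B\<in>Omega m. d \<le> Delta m X (PB m B))"
    using MIeq A1 PBin by blast
  have part_b: "(d = MI m X \<and> (\<forall>P\<in>partitions2 m. Delta m X P = MI m X \<longrightarrow> P = singletons m))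
      \<longleftrightarrow> (\<forall>B\<in>Omega m. d < Delta m X (PB m B))"
  proof
    assume H: "d = MI m X \<and> (\<forall>P\<in>partitions2 m. Delta m X P = MI m X \<longrightarrow> P = singletons m)"
    show "\<forall>B\<in>Omega m. d < Delta m X (PB m B)"
    proof
      fix B assume B: "B \<in> Omega m"
      have "d \<le> Delta m X (PB m B)" using H part_a B by blast
      moreover have "Delta m X (PB m B) \<noteq> d" using H PBin[OF B] by metis
      ultimately show "d < Delta m X (PB m B)" by simp
    qed
  next
    assume L: "\<forall>B\<in>Omega m. d < Delta m X (PB m B)"
    then have dm: "d = MI m X" using part_a by (auto intro: less_imp_le)
    show "d = MI m X \<and> (\<forall>P\<in>partitions2 m. Delta m X P = MI m X \<longrightarrow> P = singletons m)"
      using dm A2[OF L] by force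
  qed
  show ?thesis using part_a part_b unfolding d_def by blast
qed

end
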